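(* Let $s>1$. There exists a function $f:\mathbb{R}\to\mathbb{C}$ such that $f\in C_{ap}(\mathbb{R})\cap G^s(\mathbb{R})$, but for no constants $B,C>0$ does the estimate $$\sup_{x\in\mathbb{R}}|f^{(j)}(x)|\le B\,C^{j}(j!)^s\quad\text{for all } j=0,1,2,\dots$$ hold.
   Context: $C_{ap}(\mathbb{R})$ denotes the space of (Bohr) uniformly almost periodic functions on $\mathbb{R}$, i.e. the closure in the supremum norm of the trigonometric polynomials $\sum_{\xi}a_\xi e^{2\pi i \xi x}$ (finite sums, $a_\xi\in\mathbb{C}$, $\xi\in\mathbb{R}$). For $s\ge1$ and an open set $\Omega\subseteq\mathbb{R}^d$, the Gevrey space $G^s(\Omega)$ is the set of $f\in C^\infty(\Omega)$ such that for every compact $K\subseteq\Omega$ there is $C_K>0$ with $\sup_{x\in K}|\partial^\alpha f(x)|\le C_K^{1+|\alpha|}(\alpha!)^s$ for all $\alpha\in\mathbb{N}^d$. *)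

theory Defs
  imports "HOL-Analysis.Analysis"
begin

definition trig_poly :: "(real \<Rightarrow> complex) \<Rightarrow> bool" where
  "trig_poly p \<longleftrightarrow> (\<exists>F a. finite F \<and>
      (\<forall>x. p x = (\<Sum>\<xi>\<in>F. a \<xi> * exp (2 * of_real pi * \<i> * of_real \<xi> * of_real x))))"

definition almost_periodic :: "(real \<Rightarrow> complex) \<Rightarrow> bool" where
  "almost_periodic f \<longleftrightarrow> (\<forall>e>0. \<exists>p. trig_poly p \<and> (\<forall>x. norm (f x - p x) \<le> e))"

fun rderiv :: "nat \<Rightarrow> (real \<Rightarrow> complex) \<Rightarrow> real \<Rightarrow> complex" where
  "rderiv 0 f = f"
| "rderiv (Suc n) f = (\<lambda>x. vector_derivative (rderiv n f) (at x))"

definition smooth_R :: "(real \<Rightarrow> complex) \<Rightarrow> bool" where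
  "smooth_R f \<longleftrightarrow> (\<forall>n x. rderiv n f differentiable (at x))"

definition gevrey :: "real \<Rightarrow> (real \<Rightarrow> complex) \<Rightarrow> bool" where
  "gevrey s f \<longleftrightarrow> smooth_R f \<and>
     (\<forall>K. compact K \<longrightarrow> (\<exists>C>0. \<forall>j. \<forall>x\<in>K.
         norm (rderiv j f x) \<le> C ^ (1 + j) * (fact j) powr s))"

end

theory Submission
  imports Defs
begin

definition lam :: "nat \<Rightarrow> real" where "lam m = 20^m"
definition aa :: "nat \<Rightarrow> real" where "aa m = (1/2)^m"
fun DD :: "nat \<Rightarrow> real" where
  "DD 0 = lam 0 + 1"
| "DD (Suc m) = DD m + lam (Suc m) + 1"
definition del :: "nat \<Rightarrow> real" where "del m = exp (- DD m)"
definition mu :: "nat \<Rightarrow> real" where "mu m = lam m + del m"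
definition ee :: "real \<Rightarrow> real \<Rightarrow> complex" where "ee c x = exp (\<i> * of_real (c * x))"
definition ge :: "nat \<Rightarrow> nat \<Rightarrow> real \<Rightarrow> complex" where
  "ge j m x = of_real (aa m) * ((\<i> * of_real (lam m))^j * ee (lam m) x - (\<i> * of_real (mu m))^j * ee (mu m) x)"
definition FF :: "nat \<Rightarrow> real \<Rightarrow> complex" where "FF j x = (\<Sum>m. ge j m x)"

lemma lam_ge1: "lam m \<ge> 1" unfolding lam_def by simp

lemma DD_nonneg: "DD m \<ge> 0"
  by (induction m) (auto simp: lam_def add_nonneg_nonneg)

lemma DD_ge: "DD m \<ge> lam m + 1"
  using DD_nonneg by (cases m) (auto simp: lam_def)

lemma DD_mono: "k < m \<Longrightarrow> DD m \<ge> DD k + lam m + 1"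
proof (induction m)
  case 0 then show ?case by simp
next
  case (Suc m)
  show ?case
  proof (cases "k = m")
    case True then show ?thesis by simp
  next
    case False
    then have "DD m \<ge> DD k + lam m + 1" using Suc by simp
    then show ?thesis using lam_ge1[of m] lam_ge1[of "Suc m"] by simp
  qed
qed

lemma del_pos: "del m > 0" by (simp add: del_def)
lemma del_le1: "del m \<le> 1" using DD_nonneg[of m] by (simp add: del_def)
lemma del_le: "del m \<le> exp (- (lam m + 1))"
  using DD_ge[of m] by (simp add: del_def)
lemma del_le2: "k < m \<Longrightarrow> del m \<le> del k * exp (- (lam m + 1))"
  using DD_mono[of k m] by (simp add: del_def flip: exp_add)

lemma exp_lower: assumes "(y::real) \<ge> 0" shows "y^j \<le> fact j * exp y"
proof -
  have "y^j / fact j \<le> exp y"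
  proof -
    have s: "(\<lambda>n. y^n /\<^sub>R fact n) sums exp y" by (rule exp_converges)
    have "(\<Sum>n\<in>{j}. y^n /\<^sub>R fact n) \<le> exp y"
      using s assms by (intro sum_le_suminf[of _ "{j}", THEN order_trans]) (auto simp: sums_iff)
    then show ?thesis by (simp add: divide_inverse mult.commute)
  qed
  then show ?thesis by (simp add: divide_le_eq mult.commute)
qed

lemma pow_diff: fixes l d :: real assumes "l \<ge> 0" "d \<ge> 0" "d \<le> 1"
  shows "0 \<le> (l+d)^j - l^j \<and> (l+d)^j - l^j \<le> j * d * (l+1)^j"
proof (induction j)
  case 0 then show ?case by simp
next
  case (Suc j)
  have e: "(l+d)^Suc j - l^Suc j = (l+d)*((l+d)^j - l^j) + d * l^j" by (simp add: algebra_simps)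
  have a: "0 \<le> (l+d)*((l+d)^j - l^j)" using Suc assms by simp
  have b: "(l+d)*((l+d)^j - l^j) \<le> (l+1)*(j * d * (l+1)^j)"
    using Suc assms by (intro mult_mono) auto
  have c: "d * l^j \<le> d * (l+1)^Suc j"
  proof -
    have "l^j \<le> (l+1)^j" using assms by (intro power_mono) auto
    also have "\<dots> \<le> (l+1)^Suc j" using assms by (intro power_increasing) auto
    finally show ?thesis using assms by (intro mult_left_mono) auto
  qed
  have f: "(Suc j) * d * (l+1)^Suc j = (l+1)*(j * d * (l+1)^j) + d * (l+1)^Suc j"
    by (simp add: algebra_simps)
  have g: "0 \<le> d * l^j" using assms by simp
  show ?case using e a b c f g by linarith
qed

lemma ee_diff: "norm (ee a x - ee b x) \<le> \<bar>a - b\<bar> * \<bar>x\<bar>"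
proof -
  have "ee a x - ee b x = ee b x * (exp (\<i> * of_real ((a-b)*x)) - 1)"
    by (simp add: ee_def algebra_simps flip: exp_add)
  moreover have "norm (ee b x) = 1" by (simp add: ee_def)
  moreover have "norm (exp (\<i> * of_real ((a-b)*x)) - 1) \<le> \<bar>a - b\<bar> * \<bar>x\<bar>"
    using Taylor_exp[of "\<i> * of_real ((a-b)*x)" 0]
    by (simp add: norm_mult abs_mult flip: of_real_diff)
  ultimately show ?thesis by (simp add: norm_mult)
qed

lemma ee_norm [simp]: "norm (ee c x) = 1" by (simp add: ee_def)

lemma ee_deriv: "(ee c has_vector_derivative (\<i> * of_real c * ee c x)) (at x)"
proof -
  have "((\<lambda>z. exp (\<i> * of_real c * z)) has_field_derivative
          (exp (\<i> * of_real c * of_real x) * (\<i> * of_real c))) (at (of_real x))"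
    by (auto intro!: derivative_eq_intros)
  from has_vector_derivative_real_field[OF this]
  show ?thesis unfolding ee_def by (simp add: mult.assoc mult.commute mult.left_commute)
qed

lemma ge_deriv: "(ge j m has_vector_derivative ge (Suc j) m x) (at x)"
proof -
  have eq: "ge j m = (\<lambda>x. of_real (aa m) * ((\<i> * of_real (lam m))^j * ee (lam m) x
       - (\<i> * of_real (mu m))^j * ee (mu m) x))" by (rule ext) (simp add: ge_def)
  have "((\<lambda>x. of_real (aa m) * ((\<i> * of_real (lam m))^j * ee (lam m) x
       - (\<i> * of_real (mu m))^j * ee (mu m) x)) has_vector_derivative
       of_real (aa m) * ((\<i> * of_real (lam m))^j * (\<i> * of_real (lam m) * ee (lam m) x)
       - (\<i> * of_real (mu m))^j * (\<i> * of_real (mu m) * ee (mu m) x))) (at x)"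
    by (intro has_vector_derivative_mult_right has_vector_derivative_diff ee_deriv)
  then show ?thesis unfolding eq by (simp add: ge_def mult_ac)
qed

lemma ge_bound: "norm (ge j m x) \<le> aa m * del m * (lam m + 1)^j * (j + \<bar>x\<bar>)"
proof -
  define l where "l = lam m"
  define d where "d = del m"
  have l0: "l \<ge> 0" using lam_ge1[of m] by (simp add: l_def)
  have d0: "d \<ge> 0" "d \<le> 1" using del_pos[of m] del_le1[of m] by (auto simp: d_def)
  have mu: "mu m = l + d" by (simp add: mu_def l_def d_def)
  have a0: "aa m \<ge> 0" by (simp add: aa_def)
  have e1: "ge j m x = of_real (aa m) * (\<i>^j * of_real l ^ j * ee l x - \<i>^j * of_real (l+d) ^ j * ee (l+d) x)"
    unfolding ge_def mu l_def[symmetric] power_mult_distrib by simp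
  have eq: "ge j m x = of_real (aa m) * \<i>^j * ((of_real l ^ j - of_real (l+d) ^ j) * ee l x
       + of_real (l+d) ^ j * (ee l x - ee (l+d) x))"
    unfolding e1 by (simp add: algebra_simps)
  have pd: "0 \<le> (l+d)^j - l^j" "(l+d)^j - l^j \<le> j * d * (l+1)^j"
    using pow_diff[OF l0 d0] by auto
  have ld: "(l+d)^j \<le> (l+1)^j" using d0 l0 by (intro power_mono) auto
  have n1: "norm ((of_real l ^ j - of_real (l+d) ^ j) * ee l x) \<le> j * d * (l+1)^j"
  proof -
    have hq: "of_real l ^ j - of_real (l+d) ^ j = (of_real (l^j - (l+d)^j) :: complex)" by simp
    show ?thesis unfolding hq norm_mult norm_of_real ee_norm using pd by simp
  qed
  have n2: "norm (of_real (l+d) ^ j * (ee l x - ee (l+d) x)) \<le> (l+1)^j * (d * \<bar>x\<bar>)"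
  proof -
    have "norm (ee l x - ee (l+d) x) \<le> d * \<bar>x\<bar>" using ee_diff[of l x "l+d"] d0 by simp
    moreover have "norm (of_real (l+d) ^ j :: complex) = (l+d)^j" using l0 d0 by (simp add: norm_power del: of_real_add)
    ultimately show ?thesis using ld l0 d0 by (simp add: norm_mult del: of_real_add) (intro mult_mono, auto)
  qed
  have "norm (ge j m x) = aa m * norm ((of_real l ^ j - of_real (l+d) ^ j) * ee l x
       + of_real (l+d) ^ j * (ee l x - ee (l+d) x))"
    using a0 unfolding eq norm_mult by (simp add: norm_power)
  also have "\<dots> \<le> aa m * (j * d * (l+1)^j + (l+1)^j * (d * \<bar>x\<bar>))"
    using n1 n2 a0 by (intro mult_left_mono norm_triangle_le) auto
  also have "\<dots> = aa m * d * (l + 1)^j * (j + \<bar>x\<bar>)" by (simp add: algebra_simps)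
  finally show ?thesis by (simp add: l_def d_def)
qed

lemma del_fact: "del m * (lam m + 1)^j \<le> fact j"
proof -
  have "(lam m + 1)^j \<le> fact j * exp (lam m + 1)" using lam_ge1[of m] by (intro exp_lower) auto
  then have "del m * (lam m + 1)^j \<le> del m * (fact j * exp (lam m + 1))"
    using del_pos[of m] by (intro mult_left_mono) auto
  also have "\<dots> \<le> exp (- (lam m + 1)) * (fact j * exp (lam m + 1))"
    using del_le[of m] by (intro mult_right_mono) auto
  also have "\<dots> = fact j * (exp (- (lam m + 1)) * exp (lam m + 1))" by (simp add: mult_ac)
  also have "\<dots> = fact j" by (simp flip: exp_add)
  finally show ?thesis .
qed

lemma ge_bound2: "norm (ge j m x) \<le> aa m * (fact j * (j + \<bar>x\<bar>))"
proof -
  have "norm (ge j m x) \<le> aa m * (del m * (lam m + 1)^j) * (j + \<bar>x\<bar>)"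
    using ge_bound[of j m x] by (simp add: mult_ac)
  also have "\<dots> \<le> aa m * fact j * (j + \<bar>x\<bar>)"
    using del_fact[of m j] by (intro mult_right_mono mult_left_mono) (auto simp: aa_def)
  finally show ?thesis by (simp add: mult_ac)
qed

lemma summable_aa: "summable (\<lambda>m. aa m * c)"
  unfolding aa_def by (intro summable_mult2 summable_geometric) auto

lemma suminf_aa: "(\<Sum>m. aa m) = 2"
  unfolding aa_def using suminf_geometric[of "1/2::real"] by simp

lemma summable_ge: "summable (\<lambda>m. ge j m x)"
  by (rule summable_comparison_test'[OF summable_aa ge_bound2])

lemma series_vd:
  fixes g g' :: "nat \<Rightarrow> real \<Rightarrow> complex"
  assumes d: "\<And>n x. (g n has_vector_derivative g' n x) (at x)"
    and b: "\<And>R. \<exists>M. summable M \<and> (\<forall>n y. \<bar>y\<bar> \<le> R \<longrightarrow> norm (g' n y) \<le> M n)"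
    and s: "\<And>x. summable (\<lambda>n. g n x)"
  shows "((\<lambda>x. \<Sum>n. g n x) has_vector_derivative (\<Sum>n. g' n x)) (at x)"
proof -
  obtain M where M: "summable M" "\<And>n y. \<bar>y\<bar> \<le> \<bar>x\<bar> + 1 \<Longrightarrow> norm (g' n y) \<le> M n"
    using b[of "\<bar>x\<bar> + 1"] by blast
  define S where "S = ball x 1"
  have yS: "\<bar>y\<bar> \<le> \<bar>x\<bar> + 1" if "y \<in> S" for y
    using that by (auto simp: S_def dist_real_def)
  have ul: "uniform_limit S (\<lambda>n y. \<Sum>i<n. g' i y) (\<lambda>y. \<Sum>i. g' i y) sequentially"
    by (rule Weierstrass_m_test[OF _ M(1)]) (use M(2) yS in auto)
  have "\<exists>G. \<forall>y\<in>S. (\<lambda>n. g n y) sums (G y) \<and>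
          (G has_derivative (\<lambda>h. h *\<^sub>R (\<Sum>i. g' i y))) (at y within S)"
  proof (rule has_derivative_series[where f' = "\<lambda>n y h. h *\<^sub>R g' n y"])
    show "convex S" by (simp add: S_def)
    show "(g n has_derivative (\<lambda>h. h *\<^sub>R g' n y)) (at y within S)" if "y \<in> S" for n y
      using d[of n y] unfolding has_vector_derivative_def by (rule has_derivative_at_withinI)
    show "\<forall>\<^sub>F n in sequentially. \<forall>y\<in>S. \<forall>h. norm ((\<Sum>i<n. h *\<^sub>R g' i y) - h *\<^sub>R (\<Sum>i. g' i y)) \<le> e * norm h"
      if e: "e > 0" for e
    proof -
      have "\<forall>\<^sub>F n in sequentially. \<forall>y\<in>S. dist (\<Sum>i<n. g' i y) (\<Sum>i. g' i y) < e"
        using ul e unfolding uniform_limit_iff by blast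
      then show ?thesis
      proof eventually_elim
        case (elim n)
        show ?case
        proof (intro ballI allI)
          fix y h assume y: "y \<in> S"
          have "norm ((\<Sum>i<n. h *\<^sub>R g' i y) - h *\<^sub>R (\<Sum>i. g' i y))
                = \<bar>h\<bar> * norm ((\<Sum>i<n. g' i y) - (\<Sum>i. g' i y))"
            by (simp add: scaleR_sum_right[symmetric] flip: scaleR_diff_right)
          also have "\<dots> \<le> \<bar>h\<bar> * e"
            using elim y by (intro mult_left_mono) (auto simp: dist_norm)
          finally show "norm ((\<Sum>i<n. h *\<^sub>R g' i y) - h *\<^sub>R (\<Sum>i. g' i y)) \<le> e * norm h"
            by (simp add: mult.commute)
        qed
      qed
    qed
    show "x \<in> S" by (simp add: S_def)
    show "(\<lambda>n. g n x) sums (\<Sum>n. g n x)" using s by (simp add: summable_sums)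
  qed
  then obtain G where G: "\<And>y. y \<in> S \<Longrightarrow> (\<lambda>n. g n y) sums (G y)"
     "\<And>y. y \<in> S \<Longrightarrow> (G has_derivative (\<lambda>h. h *\<^sub>R (\<Sum>i. g' i y))) (at y within S)"
    by blast
  have xS: "x \<in> S" "open S" by (auto simp: S_def)
  have "(G has_derivative (\<lambda>h. h *\<^sub>R (\<Sum>i. g' i x))) (at x)"
    using G(2)[OF xS(1)] by (simp add: at_within_open[OF xS])
  then have "((\<lambda>y. \<Sum>n. g n y) has_derivative (\<lambda>h. h *\<^sub>R (\<Sum>i. g' i x))) (at x)"
    by (rule has_derivative_transform_within_open[OF _ xS(2) xS(1)]) (use G(1) in \<open>auto simp: sums_iff\<close>)
  then show ?thesis by (simp add: has_vector_derivative_def)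
qed

lemma FF_deriv: "(FF j has_vector_derivative FF (Suc j) x) (at x)"
proof -
  have "((\<lambda>x. \<Sum>n. ge j n x) has_vector_derivative (\<Sum>n. ge (Suc j) n x)) (at x)"
  proof (rule series_vd[OF ge_deriv _ summable_ge])
    fix R
    show "\<exists>M. summable M \<and> (\<forall>n y. \<bar>y\<bar> \<le> R \<longrightarrow> norm (ge (Suc j) n y) \<le> M n)"
    proof (intro exI conjI allI impI)
      show "summable (\<lambda>n. aa n * (fact (Suc j) * (Suc j + R)))" by (rule summable_aa)
      fix n y assume "\<bar>y\<bar> \<le> R"
      have "norm (ge (Suc j) n y) \<le> aa n * (fact (Suc j) * (Suc j + \<bar>y\<bar>))" by (rule ge_bound2)
      also have "\<dots> \<le> aa n * (fact (Suc j) * (Suc j + R))"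
        using \<open>\<bar>y\<bar> \<le> R\<close> by (intro mult_left_mono) (auto simp: aa_def)
      finally show "norm (ge (Suc j) n y) \<le> aa n * (fact (Suc j) * (Suc j + R))" .
    qed
  qed
  then show ?thesis by (simp add: FF_def[abs_def])
qed

lemma rderiv_FF: "rderiv j (FF 0) = FF j"
proof (induction j)
  case 0 then show ?case by simp
next
  case (Suc j)
  show ?case by (rule ext) (simp add: Suc vector_derivative_at[OF FF_deriv])
qed

lemma trig_poly_ee: "trig_poly (\<lambda>x. c * ee l x)"
  unfolding trig_poly_def
proof (intro exI conjI allI)
  show "finite {l / (2 * pi)}" by simp
  fix x
  have "2 * complex_of_real pi * \<i> * complex_of_real (l / (2 * pi)) * complex_of_real x
        = \<i> * complex_of_real (l * x)"
    by (simp add: field_simps)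
  then show "c * ee l x = (\<Sum>\<xi>\<in>{l / (2 * pi)}. (\<lambda>_. c) \<xi> * exp (2 * complex_of_real pi * \<i> * complex_of_real \<xi> * complex_of_real x))"
    by (simp add: ee_def mult.assoc)
qed

lemma trig_poly_add: assumes "trig_poly p" "trig_poly q" shows "trig_poly (\<lambda>x. p x + q x)"
proof -
  obtain F a where F: "finite F" "\<And>x. p x = (\<Sum>\<xi>\<in>F. a \<xi> * exp (2 * of_real pi * \<i> * of_real \<xi> * of_real x))"
    using assms(1) unfolding trig_poly_def by blast
  obtain G b where G: "finite G" "\<And>x. q x = (\<Sum>\<xi>\<in>G. b \<xi> * exp (2 * of_real pi * \<i> * of_real \<xi> * of_real x))"
    using assms(2) unfolding trig_poly_def by blast
  define c where "c \<xi> = (if \<xi> \<in> F then a \<xi> else 0) + (if \<xi> \<in> G then b \<xi> else 0)" for \<xi>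
  show ?thesis unfolding trig_poly_def
  proof (intro exI conjI allI)
    show "finite (F \<union> G)" using F G by simp
    fix x
    let ?E = "\<lambda>\<xi>. exp (2 * complex_of_real pi * \<i> * complex_of_real \<xi> * complex_of_real x)"
    have 1: "(\<Sum>\<xi>\<in>F \<union> G. (if \<xi> \<in> F then a \<xi> else 0) * ?E \<xi>) = (\<Sum>\<xi>\<in>F. a \<xi> * ?E \<xi>)"
      using F G by (intro sum.mono_neutral_cong_right) auto
    have 2: "(\<Sum>\<xi>\<in>F \<union> G. (if \<xi> \<in> G then b \<xi> else 0) * ?E \<xi>) = (\<Sum>\<xi>\<in>G. b \<xi> * ?E \<xi>)"
      using F G by (intro sum.mono_neutral_cong_right) auto
    show "p x + q x = (\<Sum>\<xi>\<in>F \<union> G. c \<xi> * ?E \<xi>)"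
      unfolding c_def distrib_right sum.distrib 1 2 using F G by simp
  qed
qed

lemma trig_poly_zero: "trig_poly (\<lambda>x. 0)"
  unfolding trig_poly_def by (rule exI[of _ "{}"]) simp

lemma trig_poly_partial: "trig_poly (\<lambda>x. \<Sum>m<n. ge 0 m x)"
proof (induction n)
  case 0 then show ?case by (simp add: trig_poly_zero)
next
  case (Suc n)
  have e: "(\<lambda>x. \<Sum>m<Suc n. ge 0 m x) = (\<lambda>x. (\<Sum>m<n. ge 0 m x) +
     ((of_real (aa n) * ee (lam n) x) + ((- of_real (aa n)) * ee (mu n) x)))"
    by (rule ext) (simp add: ge_def algebra_simps)
  show ?case unfolding e by (intro trig_poly_add Suc trig_poly_ee)
qed

lemma ap: "almost_periodic (FF 0)"
  unfolding almost_periodic_def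
proof (intro allI impI)
  fix e :: real assume e: "e > 0"
  obtain n where n: "(1/2::real)^n < e/4" using real_arch_pow_inv[of "e/4" "1/2"] e by auto
  show "\<exists>p. trig_poly p \<and> (\<forall>x. norm (FF 0 x - p x) \<le> e)"
  proof (intro exI conjI allI)
    show "trig_poly (\<lambda>x. \<Sum>m<n. ge 0 m x)" by (rule trig_poly_partial)
    fix x
    have "FF 0 x - (\<Sum>m<n. ge 0 m x) = (\<Sum>i. ge 0 (i + n) x)"
      unfolding FF_def using suminf_split_initial_segment[OF summable_ge, of 0 x n] by simp
    also have "norm \<dots> \<le> (\<Sum>i. (1/2)^n * (2 * (1/2)^i))"
    proof (rule norm_suminf_le)
      fix i
      have "norm (ge 0 (i+n) x) = aa (i+n) * norm (ee (lam (i+n)) x - ee (mu (i+n)) x)"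
        unfolding ge_def norm_mult norm_of_real by (simp add: aa_def)
      then have "norm (ge 0 (i + n) x) \<le> aa (i+n) * 2"
        using norm_triangle_ineq4[of "ee (lam (i+n)) x" "ee (mu (i+n)) x"]
        by (simp add: aa_def)
      then show "norm (ge 0 (i + n) x) \<le> (1/2)^n * (2 * (1/2)^i)" by (simp add: aa_def power_add mult_ac)
      show "summable (\<lambda>i. (1/2::real)^n * (2 * (1/2)^i))"
        by (intro summable_mult summable_geometric) auto
    qed
    also have "\<dots> = (1/2)^n * 4"
      using suminf_geometric[of "1/2::real"] by (simp add: suminf_mult)
    also have "\<dots> \<le> e" using n by simp
    finally show "norm (FF 0 x - (\<Sum>m<n. ge 0 m x)) \<le> e" .
  qed
qed

lemma summable_aa1: "summable aa"
  unfolding aa_def by (rule summable_geometric) auto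

lemma FF_bound: "norm (FF j x) \<le> 2 * (fact j * (j + \<bar>x\<bar>))"
proof -
  have "norm (FF j x) \<le> (\<Sum>m. aa m * (fact j * (j + \<bar>x\<bar>)))"
    unfolding FF_def by (rule norm_suminf_le[OF ge_bound2 summable_aa])
  also have "\<dots> = 2 * (fact j * (j + \<bar>x\<bar>))"
    using suminf_mult2[OF summable_aa1, of "fact j * (j + \<bar>x\<bar>)"] suminf_aa by simp
  finally show ?thesis .
qed

lemma gev: assumes "s > 1" shows "gevrey s (FF 0)"
  unfolding gevrey_def
proof (intro conjI allI impI)
  show "smooth_R (FF 0)" unfolding smooth_R_def rderiv_FF
    by (intro allI differentiableI_vector[OF FF_deriv])
  fix K :: "real set" assume "compact K"
  then obtain R0 where R0: "\<And>x. x \<in> K \<Longrightarrow> norm x \<le> R0"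
    using compact_imp_bounded bounded_iff by metis
  define R where "R = max R0 0"
  have R: "R \<ge> 0" "\<And>x. x \<in> K \<Longrightarrow> \<bar>x\<bar> \<le> R" using R0 by (force simp: R_def)+
  show "\<exists>C>0. \<forall>j. \<forall>x\<in>K. norm (rderiv j (FF 0) x) \<le> C ^ (1 + j) * fact j powr s"
  proof (intro exI conjI allI ballI)
    show "2 * (R + 2) > 0" using R by simp
    fix j x assume x: "x \<in> K"
    have b1: "2 * (j + R) \<le> (2 * (R + 2)) ^ (1 + j)"
    proof -
      have "1 + real (1 + j) * (R + 1) \<le> (1 + (R + 1)) ^ (1 + j)"
        using R by (intro Bernoulli_inequality) auto
      moreover have "real (1 + j) * (R + 1) = j * R + j + R + 1" by (simp add: algebra_simps)
      moreover have "(1 + (R + 1)) ^ (1 + j) = (R + 2) ^ (1 + j)" by (simp add: add_ac)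
      moreover have "0 \<le> j * R" using R by simp
      ultimately have "j + R \<le> (R + 2) ^ (1 + j)" by linarith
      moreover have "(2::real) \<le> 2 ^ (1 + j)" by simp
      moreover have "(2 * (R + 2)) ^ (1 + j) = 2 ^ (1 + j) * (R + 2) ^ (1 + j)"
        by (rule power_mult_distrib)
      ultimately have A: "j + R \<le> (R + 2) ^ (1 + j)" and B: "(2::real) \<le> 2 ^ (1 + j)"
        and C: "(2 * (R + 2)) ^ (1 + j) = 2 ^ (1 + j) * (R + 2) ^ (1 + j)" by blast+
      have P: "0 \<le> (R + 2) ^ (1 + j)" using R by simp
      have "2 * (j + R) \<le> 2 * (R + 2) ^ (1 + j)" using A by simp
      also have "\<dots> \<le> 2 ^ (1 + j) * (R + 2) ^ (1 + j)" using B P by (rule mult_right_mono)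
      finally show ?thesis using C by simp
    qed
    have b2: "fact j \<le> (fact j :: real) powr s"
    proof -
      have "(fact j :: real) powr 1 \<le> fact j powr s"
        using assms by (intro powr_mono) auto
      then show ?thesis by simp
    qed
    have "norm (rderiv j (FF 0) x) \<le> 2 * (fact j * (j + \<bar>x\<bar>))"
      unfolding rderiv_FF by (rule FF_bound)
    also have "\<dots> \<le> (2 * (j + R)) * fact j" using R(2)[OF x] by (simp add: algebra_simps)
    also have "\<dots> \<le> (2 * (R + 2)) ^ (1 + j) * fact j powr s"
      using b1 b2 R by (intro mult_mono) auto
    finally show "norm (rderiv j (FF 0) x) \<le> (2 * (R + 2)) ^ (1 + j) * fact j powr s" .
  qed
qed

lemma aa_lam: "aa k * lam k = 10^k"
  unfolding aa_def lam_def by (simp flip: power_mult_distrib)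

lemma main_term: "norm (ge 1 k (pi / del k)) \<ge> 2 * 10^k"
proof -
  define x where "x = pi / del k"
  have dk: "del k > 0" by (rule del_pos)
  have e1: "mu k * x = lam k * x + pi" using dk by (simp add: mu_def x_def field_simps)
  have e2: "ee (mu k) x = - ee (lam k) x"
  proof -
    have "ee (mu k) x = exp (\<i> * of_real (lam k * x) + \<i> * of_real pi)"
      unfolding ee_def e1 by (simp add: distrib_left)
    also have "\<dots> = ee (lam k) x * exp (\<i> * of_real pi)" by (simp add: ee_def exp_add)
    finally show ?thesis by simp
  qed
  have eq: "ge 1 k x = of_real (aa k) * \<i> * ee (lam k) x * of_real (lam k + mu k)"
    unfolding ge_def e2 by (simp add: algebra_simps)
  have "norm (ge 1 k x) = aa k * (lam k + mu k)"
    unfolding eq norm_mult norm_of_real using lam_ge1[of k] del_pos[of k] by (simp add: aa_def mu_def)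
  also have "\<dots> \<ge> aa k * (2 * lam k)"
    using del_pos[of k] by (intro mult_left_mono) (auto simp: mu_def aa_def)
  finally show ?thesis using aa_lam[of k] unfolding x_def by (simp add: mult_ac)
qed

lemma crude: "norm (ge 1 m x) \<le> 2 * 10^m + 1"
proof -
  have "norm (ge 1 m x) = aa m * norm (\<i> * of_real (lam m) * ee (lam m) x - \<i> * of_real (mu m) * ee (mu m) x)"
    unfolding ge_def norm_mult norm_of_real by (simp add: aa_def)
  also have "\<dots> \<le> aa m * (lam m + mu m)"
  proof (intro mult_left_mono)
    show "0 \<le> aa m" by (simp add: aa_def)
    have "norm (\<i> * of_real (lam m) * ee (lam m) x - \<i> * of_real (mu m) * ee (mu m) x)
      \<le> norm (\<i> * of_real (lam m) * ee (lam m) x) + norm (\<i> * of_real (mu m) * ee (mu m) x)"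
      by (rule norm_triangle_ineq4)
    also have "\<dots> = lam m + mu m" unfolding norm_mult norm_of_real using lam_ge1[of m] del_pos[of m]
      by (simp add: mu_def)
    finally show "norm (\<i> * of_real (lam m) * ee (lam m) x - \<i> * of_real (mu m) * ee (mu m) x) \<le> lam m + mu m" .
  qed
  also have "\<dots> \<le> aa m * (2 * lam m) + aa m"
    using del_le1[of m] by (simp add: mu_def algebra_simps aa_def)
  also have "\<dots> \<le> 2 * 10^m + 1"
  proof -
    have "aa m \<le> 1" by (simp add: aa_def power_le_one)
    moreover have "aa m * (2 * lam m) = 2 * (aa m * lam m)" by simp
    ultimately show ?thesis using aa_lam[of m] by linarith
  qed
  finally show ?thesis .
qed

lemma crude_sum: "(\<Sum>m<k. (2 * 10^m + 1 :: real)) \<le> 10^k / 2"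
proof (induction k)
  case 0 then show ?case by simp
next
  case (Suc k)
  have h: "(1::real) \<le> 10^k" by simp
  have "(\<Sum>m<Suc k. (2 * 10^m + 1 :: real)) = (\<Sum>m<k. (2 * 10^m + 1 :: real)) + (2*10^k+1)" by simp
  moreover have "(10::real)^Suc k = 10 * 10^k" by simp
  ultimately show ?case using Suc h by linarith
qed

lemma tail_term: assumes "k < m" shows "norm (ge 1 m (pi / del k)) \<le> 5 * aa m"
proof -
  define E where "E = exp (- (lam m + 1))"
  have dk: "del k > 0" by (rule del_pos)
  have q: "del m / del k \<le> E" using del_le2[OF assms] dk by (simp add: E_def divide_le_eq mult.commute)
  have h1: "del m * (1 + pi / del k) \<le> (1 + pi) * E"
  proof -
    have "del m * (1 + pi / del k) = del m + pi * (del m / del k)" by (simp add: algebra_simps)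
    also have "\<dots> \<le> E + pi * E" using q del_le[of m] by (intro add_mono mult_left_mono) (auto simp: E_def)
    finally show ?thesis by (simp add: algebra_simps)
  qed
  have h2: "E * (lam m + 1) \<le> 1"
  proof -
    have "(lam m + 1)^1 \<le> fact 1 * exp (lam m + 1)" using lam_ge1[of m] by (intro exp_lower) auto
    then have "E * (lam m + 1) \<le> E * exp (lam m + 1)" by (intro mult_left_mono) (auto simp: E_def)
    also have "\<dots> = 1" by (simp add: E_def flip: exp_add)
    finally show ?thesis .
  qed
  have "norm (ge 1 m (pi / del k)) \<le> aa m * del m * (lam m + 1)^1 * (1 + \<bar>pi / del k\<bar>)"
    using ge_bound[of 1 m "pi / del k"] by simp
  also have "\<dots> = aa m * ((del m * (1 + pi / del k)) * (lam m + 1))"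
    using dk by (simp add: mult_ac)
  also have "\<dots> \<le> aa m * (((1 + pi) * E) * (lam m + 1))"
    using h1 lam_ge1[of m] by (intro mult_left_mono mult_right_mono) (auto simp: aa_def)
  also have "\<dots> = aa m * ((1 + pi) * (E * (lam m + 1)))" by (simp add: mult_ac)
  also have "\<dots> \<le> aa m * ((1 + pi) * 1)"
    using h2 by (intro mult_left_mono) (auto simp: aa_def)
  also have "\<dots> \<le> 5 * aa m" using pi_less_4 mult_right_mono[of "1+pi" 5 "aa m"] by (simp add: aa_def mult.commute)
  finally show ?thesis .
qed

lemma FF1_lower: "norm (FF 1 (pi / del k)) \<ge> 3/2 * 10^k - 10"
proof -
  define x where "x = pi / del k"
  define A where "A = (\<Sum>i. ge 1 (i + Suc k) x)"
  define B where "B = (\<Sum>m<k. ge 1 m x)"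
  have split: "FF 1 x = A + B + ge 1 k x"
    unfolding FF_def A_def B_def using suminf_split_initial_segment[OF summable_ge, of 1 x "Suc k"] by simp
  have t: "norm A \<le> (\<Sum>i. 5 * (1/2::real)^i)"
    unfolding A_def
  proof (rule norm_suminf_le)
    fix i
    have "norm (ge 1 (i + Suc k) x) \<le> 5 * aa (i + Suc k)" unfolding x_def by (rule tail_term) simp
    also have "\<dots> \<le> 5 * (1/2)^i" unfolding aa_def by (intro mult_left_mono power_decreasing) auto
    finally show "norm (ge 1 (i + Suc k) x) \<le> 5 * (1/2)^i" .
    show "summable (\<lambda>i. 5 * (1/2::real)^i)" by (intro summable_mult summable_geometric) auto
  qed
  have t2: "(\<Sum>i. 5 * (1/2::real)^i) = 10"
    using suminf_geometric[of "1/2::real"] by (simp add: suminf_mult)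
  have c: "norm B \<le> 10^k / 2"
  proof -
    have "norm B \<le> (\<Sum>m<k. norm (ge 1 m x))" unfolding B_def by (rule norm_sum)
    also have "\<dots> \<le> (\<Sum>m<k. (2 * 10^m + 1 :: real))" by (intro sum_mono crude)
    also have "\<dots> \<le> 10^k / 2" by (rule crude_sum)
    finally show ?thesis .
  qed
  have mt: "norm (ge 1 k x) \<ge> 2 * 10^k" unfolding x_def by (rule main_term)
  have "norm (ge 1 k x) \<le> norm (A + B + ge 1 k x) + norm A + norm B"
  proof -
    have "ge 1 k x = (A + B + ge 1 k x) - A - B" by simp
    then have "norm (ge 1 k x) = norm ((A + B + ge 1 k x) - A - B)" by simp
    also have "\<dots> \<le> norm ((A + B + ge 1 k x) - A) + norm B" by (rule norm_triangle_ineq4)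
    also have "\<dots> \<le> norm (A + B + ge 1 k x) + norm A + norm B" using norm_triangle_ineq4[of "A + B + ge 1 k x" A] by simp
    finally show ?thesis .
  qed
  then show ?thesis using split t t2 c mt unfolding x_def by simp
qed

theorem mainTheorem1:
  fixes s :: real
  assumes "s > 1"
  shows "\<exists>f :: real \<Rightarrow> complex. almost_periodic f \<and> gevrey s f \<and>
           \<not> (\<exists>B>0. \<exists>C>0. \<forall>j. \<forall>x. norm (rderiv j f x) \<le> B * C ^ j * (fact j) powr s)"
proof (intro exI conjI)
  show "almost_periodic (FF 0)" by (rule ap)
  show "gevrey s (FF 0)" using assms by (rule gev)
  show "\<not> (\<exists>B>0. \<exists>C>0. \<forall>j. \<forall>x. norm (rderiv j (FF 0) x) \<le> B * C ^ j * (fact j) powr s)"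
  proof
    assume "\<exists>B>0. \<exists>C>0. \<forall>j. \<forall>x. norm (rderiv j (FF 0) x) \<le> B * C ^ j * (fact j) powr s"
    then obtain B C where BC: "B > 0" "C > 0" "\<And>j x. norm (rderiv j (FF 0) x) \<le> B * C ^ j * (fact j) powr s"
      by blast
    obtain k where k: "B * C + 20 < (10::real)^k" using real_arch_pow[of 10 "B * C + 20"] by auto
    have "norm (FF 1 (pi / del k)) \<le> B * C"
      using BC(3)[of 1 "pi / del k"] by (simp add: rderiv_FF)
    moreover have "norm (FF 1 (pi / del k)) \<ge> 3/2 * 10^k - 10" by (rule FF1_lower)
    moreover have "(0::real) \<le> 10^k" by simp
    ultimately show False using k by linarith
  qed
qed

end
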